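(* Let $D$ be a reduced knot diagram, let $2\le k\le\infty$, and let $\boldsymbol\ell$ be a null pattern of the game matrix $M$ of some version of the $k$-color region select game on $D$. Let $s=\sigma_{\boldsymbol\ell}(e)$ for some edge $e$ of $D$. Fix a checkerboard shading of $D$, and let $r_1,r_2$ be two regions that are both shaded or both unshaded. Then there is an integer $i$ with $|2i|\le d(r_1,r_2)$ such that $\boldsymbol\ell(r_1)=\boldsymbol\ell(r_2)+2is$ in $\mathbb{Z}_k$.
   Context: Diagrams: a link (knot) diagram $D$ is the underlying graph of a regular projection of a link (knot) into $S^2$. Its vertices are the crossings, each of valence 4, and over/under information is ignored. Components without crossings are closed loops, each regarded as one edge with no vertices. Regions of $D$ are the connected components of $S^2\setminus D$. A vertex or edge is incident to a region if it lies in the boundary of that region. Two regions are adjacent if they are incident to a common edge. A vertex $v$ is reducible if some circle in $S^2$ meets $D$ transversely only at $v$, and irreducible otherwise. An irreducible vertex is incident to four distinct regions. A reducible vertex $v$ is incident to exactly three regions $r_0,r_1,r_2$, where $r_0$ touches $v$ from two sides and $r_1,r_2$ touch it from one side. A knot diagram with $n$ vertices has $n+2$ regions. A knot diagram is reduced if all its vertices are irreducible. Ring: for an integer $k\ge2$ let $\mathbb{Z}_k=\mathbb{Z}/k\mathbb{Z}$, and for $k=\infty$ let $\mathbb{Z}_\infty=\mathbb{Z}$. Game versions: a version of the $k$-color region select game on $D$ is a choice of an increment number $a(v,r)\in\mathbb{Z}_k$ for every incident vertex–region pair, subject to the following rules. - If $k<\infty$ and $v$ is irreducible, then $a(v,r)=a_v$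 is the same for all regions $r$ incident to $v$, and $a_v$ is not a zero divisor of $\mathbb{Z}_k$. - If $k<\infty$ and $v$ is reducible, then $a(v,r_0)$ is arbitrary, while $a(v,r_1)$ and $a(v,r_2)$ are not zero divisors. - If $k=\infty$, then $a(v,r)=1$, except that $a(v,r_0)\in\mathbb{Z}$ is arbitrary when $v$ is reducible. - The original game is the version in which all increment numbers equal $1$. Game matrix: enumerate the vertices as $v_1,\dots,v_n$ and the regions as $r_1,\dots,r_m$. The game matrix is the $n\times m$ matrix $M$ over $\mathbb{Z}_k$ with $M_{ij}=a(v_i,r_j)$ if $v_i$ is incident to $r_j$, and $M_{ij}=0$ otherwise. Patterns and configurations: a push pattern is a vector $\mathbf p\in\mathbb{Z}_k^m$, and $\mathbf p(r_j)=p_j$ is the number of times $r_j$ is pushed. A region $r$ is not pushed in $\mathbf p$ if $\mathbf p(r)=0$. A color configuration is a vector $\mathbf c\in\mathbb{Z}_k^n$. Applying $\mathbf p$ to $\mathbf c$ yields $\mathbf c+M\mathbf p$. The configuration $\mathbf c$ is solvable if some $\mathbf p$ satisfies $M\mathbf p=-\mathbf c$; such a $\mathbf p$ is a solving pattern for $\mathbf c$. $D$ is always solvable in the version if every $\mathbf c\in\mathbb{Z}_k^n$ is solvable. A null pattern is an element of $Ker_k(M)=\{\mathbf p\in\mathbb{Z}_k^m: M\mathbf p=0\}$. Push number: for a push pattern $\mathbf p$ and an edge $e$ incident to regions $r,r'$, the push number of $e$ is $\sigma_{\mathbf p}(e)=\mathbf p(r)+\mathbf p(r')\in\mathbb{Z}_k$.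 Checkerboard shading: a checkerboard shading of $D$ is a shading of some of its regions such that, of any two adjacent regions, exactly one is shaded. Distance: the dual graph of $D$ has one vertex per region, with an edge between the vertices of each pair of adjacent regions. The distance $d(r_1,r_2)$ is the graph distance between the corresponding vertices of the dual graph. *)

theory Defs
  imports Main "HOL-Library.Extended_Nat" "HOL-Number_Theory.Cong"
begin

text \<open>Combinatorial-map encoding of a link diagram on S^2.
  Darts (half-edges) form a finite set H. The vertex rotation sig permutes the four
  darts at each crossing cyclically; the edge involution alp swaps the two darts of an edge.\<close>

definition orb :: "('a \<Rightarrow> 'a) \<Rightarrow> 'a \<Rightarrow> 'a set" where
  "orb f d = {(f ^^ n) d | n. True}"

definition vertices :: "'a set \<Rightarrow> ('a \<Rightarrow> 'a) \<Rightarrow> 'a set set" where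
  "vertices H sig = {orb sig d | d. d \<in> H}"

definition edges :: "'a set \<Rightarrow> ('a \<Rightarrow> 'a) \<Rightarrow> 'a set set" where
  "edges H alp = {{d, alp d} | d. d \<in> H}"

definition face :: "('a \<Rightarrow> 'a) \<Rightarrow> ('a \<Rightarrow> 'a) \<Rightarrow> 'a \<Rightarrow> 'a set" where
  "face sig alp d = orb (sig \<circ> alp) d"

definition regions :: "'a set \<Rightarrow> ('a \<Rightarrow> 'a) \<Rightarrow> ('a \<Rightarrow> 'a) \<Rightarrow> 'a set set" where
  "regions H sig alp = {face sig alp d | d. d \<in> H}"

text \<open>Straight-ahead continuation: from dart d go along its edge to alp d and
  continue to the opposite dart at the next crossing.\<close>
definition straight :: "('a \<Rightarrow> 'a) \<Rightarrow> ('a \<Rightarrow> 'a) \<Rightarrow> 'a \<Rightarrow> 'a" where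
  "straight sig alp = (sig ^^ 2) \<circ> alp"

text \<open>A knot diagram (with at least one crossing): a 4-regular map of Euler characteristic 2
  (i.e. a cellularly embedded graph in S^2) whose straight-ahead walk has a single
  (undirected) component.\<close>
definition knot_diagram :: "'a set \<Rightarrow> ('a \<Rightarrow> 'a) \<Rightarrow> ('a \<Rightarrow> 'a) \<Rightarrow> bool" where
  "knot_diagram H sig alp \<longleftrightarrow>
     finite H \<and> H \<noteq> {} \<and>
     bij_betw sig H H \<and> bij_betw alp H H \<and>
     (\<forall>d\<in>H. alp d \<noteq> d \<and> alp (alp d) = d) \<and>
     (\<forall>d\<in>H. (sig ^^ 4) d = d \<and> sig d \<noteq> d \<and> (sig ^^ 2) d \<noteq> d) \<and>
     int (card (vertices H sig)) - int (card (edges H alp)) + int (card (regions H sig alp)) = 2 \<and>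
     (\<forall>d\<in>H. \<forall>d'\<in>H. \<exists>n. (straight sig alp ^^ n) d = d' \<or> (straight sig alp ^^ n) (alp d) = d')"

definition incident :: "'a set \<Rightarrow> 'a set \<Rightarrow> bool" where
  "incident x r \<longleftrightarrow> x \<inter> r \<noteq> {}"

definition adjacent :: "'a set \<Rightarrow> ('a \<Rightarrow> 'a) \<Rightarrow> ('a \<Rightarrow> 'a) \<Rightarrow> 'a set \<Rightarrow> 'a set \<Rightarrow> bool" where
  "adjacent H sig alp r r' \<longleftrightarrow> r \<in> regions H sig alp \<and> r' \<in> regions H sig alp \<and>
     (\<exists>e\<in>edges H alp. incident e r \<and> incident e r')"

text \<open>A vertex is reducible iff some region touches it at two (or more) of its four corners
  (the corner following dart d at its vertex lies in the region face d).\<close>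
definition reducible :: "'a set \<Rightarrow> ('a \<Rightarrow> 'a) \<Rightarrow> ('a \<Rightarrow> 'a) \<Rightarrow> 'a set \<Rightarrow> bool" where
  "reducible H sig alp v \<longleftrightarrow> (\<exists>r\<in>regions H sig alp. card (v \<inter> r) \<ge> 2)"

definition reduced :: "'a set \<Rightarrow> ('a \<Rightarrow> 'a) \<Rightarrow> ('a \<Rightarrow> 'a) \<Rightarrow> bool" where
  "reduced H sig alp \<longleftrightarrow> (\<forall>v\<in>vertices H sig. \<not> reducible H sig alp v)"

text \<open>Z_k is represented by int modulo zmod k; k = \<infinity> gives modulus 0, i.e. Z itself.\<close>
definition zmod :: "enat \<Rightarrow> int" where
  "zmod k = (case k of enat n \<Rightarrow> int n | \<infinity> \<Rightarrow> 0)"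

definition non_zero_divisor :: "nat \<Rightarrow> int \<Rightarrow> bool" where
  "non_zero_divisor n c \<longleftrightarrow> (\<forall>b::int. [c * b = 0] (mod int n) \<longrightarrow> [b = 0] (mod int n))"

definition game_version :: "'a set \<Rightarrow> ('a \<Rightarrow> 'a) \<Rightarrow> ('a \<Rightarrow> 'a) \<Rightarrow> enat \<Rightarrow> ('a set \<Rightarrow> 'a set \<Rightarrow> int) \<Rightarrow> bool" where
  "game_version H sig alp k a \<longleftrightarrow>
     (\<forall>v\<in>vertices H sig.
       (case k of
          enat n \<Rightarrow>
            (\<not> reducible H sig alp v \<longrightarrow>
               (\<exists>c. non_zero_divisor n c \<and>
                  (\<forall>r\<in>regions H sig alp. incident v r \<longrightarrow> [a v r = c] (mod int n)))) \<and>
            (reducible H sig alp v \<longrightarrow>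
               (\<forall>r\<in>regions H sig alp. incident v r \<and> card (v \<inter> r) = 1 \<longrightarrow> non_zero_divisor n (a v r)))
        | \<infinity> \<Rightarrow>
            (\<forall>r\<in>regions H sig alp. incident v r \<longrightarrow>
               (\<not> reducible H sig alp v \<or> card (v \<inter> r) = 1) \<longrightarrow> a v r = 1)))"

definition game_matrix :: "('a set \<Rightarrow> 'a set \<Rightarrow> int) \<Rightarrow> 'a set \<Rightarrow> 'a set \<Rightarrow> int" where
  "game_matrix a v r = (if incident v r then a v r else 0)"

definition null_pattern :: "'a set \<Rightarrow> ('a \<Rightarrow> 'a) \<Rightarrow> ('a \<Rightarrow> 'a) \<Rightarrow> enat \<Rightarrow> ('a set \<Rightarrow> 'a set \<Rightarrow> int) \<Rightarrow> ('a set \<Rightarrow> int) \<Rightarrow> bool" where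
  "null_pattern H sig alp k a l \<longleftrightarrow>
     (\<forall>v\<in>vertices H sig. [(\<Sum>r\<in>regions H sig alp. game_matrix a v r * l r) = 0] (mod zmod k))"

definition push_number :: "('a \<Rightarrow> 'a) \<Rightarrow> ('a \<Rightarrow> 'a) \<Rightarrow> ('a set \<Rightarrow> int) \<Rightarrow> 'a set \<Rightarrow> int" where
  "push_number sig alp l e = (let d = (SOME d. d \<in> e) in l (face sig alp d) + l (face sig alp (alp d)))"

definition checkerboard :: "'a set \<Rightarrow> ('a \<Rightarrow> 'a) \<Rightarrow> ('a \<Rightarrow> 'a) \<Rightarrow> 'a set set \<Rightarrow> bool" where
  "checkerboard H sig alp S \<longleftrightarrow> S \<subseteq> regions H sig alp \<and>
     (\<forall>r r'. adjacent H sig alp r r' \<and> r \<noteq> r' \<longrightarrow> (r \<in> S \<longleftrightarrow> r' \<notin> S))"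

definition dual_dist :: "'a set \<Rightarrow> ('a \<Rightarrow> 'a) \<Rightarrow> ('a \<Rightarrow> 'a) \<Rightarrow> 'a set \<Rightarrow> 'a set \<Rightarrow> nat" where
  "dual_dist H sig alp r r' = (LEAST n. (r, r') \<in> {(x, y). adjacent H sig alp x y} ^^ n)"

end

theory Submission
  imports Defs
begin

lemma funpow_in: "(\<forall>x\<in>H. f x \<in> H) \<Longrightarrow> z \<in> H \<Longrightarrow> (f ^^ n) z \<in> H"
  by (induction n) auto

lemma funpow_cancel:
  assumes "inj_on f H" "\<forall>x\<in>H. f x \<in> H"
  shows "a \<in> H \<Longrightarrow> b \<in> H \<Longrightarrow> (f ^^ i) a = (f ^^ i) b \<Longrightarrow> a = b"
proof (induction i arbitrary: a b)
  case 0 then show ?case by simp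
next
  case (Suc i)
  have "(f ^^ i) (f a) = (f ^^ i) (f b)" by (metis Suc.prems(3) comp_apply funpow_Suc_right)
  then have "f a = f b" using Suc.IH Suc.prems assms by blast
  then show ?case using assms Suc.prems by (meson inj_onD)
qed

lemma periodic:
  assumes "finite H" "inj_on f H" "\<forall>x\<in>H. f x \<in> H" "z \<in> H"
  shows "\<exists>p>0. (f ^^ p) z = z"
proof -
  define g where "g = (\<lambda>n. (f ^^ n) z)"
  have "range g \<subseteq> H" unfolding g_def using funpow_in[of H f z] assms(3,4) by auto
  then have "finite (range g)" using assms(1) by (rule finite_subset)
  then have "\<not> inj g" using finite_imageD[of g UNIV] infinite_UNIV_nat by auto
  then obtain i j where ij: "i \<noteq> j" "g i = g j" unfolding inj_def by auto
  have "\<exists>i j. i < j \<and> g i = g j"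
  proof (cases "i < j")
    case True then show ?thesis using ij by blast
  next
    case False then have "j < i" using ij(1) by simp
    then show ?thesis using ij by metis
  qed
  then obtain i j where ij: "i < j" "(f ^^ i) z = (f ^^ j) z" unfolding g_def by blast
  have "(f ^^ i) ((f ^^ (j - i)) z) = (f ^^ j) z"
  proof -
    have "i + (j - i) = j" using ij(1) by simp
    then show ?thesis by (metis funpow_add o_apply)
  qed
  moreover have "(f ^^ (j - i)) z \<in> H" using funpow_in[of H f z] assms(3,4) by auto
  ultimately have "(f ^^ (j - i)) z = z"
    using funpow_cancel[OF assms(2,3), of "(f ^^ (j - i)) z" z i] assms(4) ij(2) by simp
  then show ?thesis using ij(1) by (intro exI[of _ "j - i"]) auto
qed

lemma funpow_period: "(f ^^ p) z = z \<Longrightarrow> (f ^^ (p * n)) z = z"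
proof (induction n)
  case 0 then show ?case by simp
next
  case (Suc n)
  have "p * Suc n = p + p * n" by simp
  then have "(f ^^ (p * Suc n)) z = (f ^^ p) ((f ^^ (p * n)) z)" by (metis funpow_add o_apply)
  then show ?case using Suc by simp
qed

lemma orbI: "w = (f ^^ m) y \<Longrightarrow> w \<in> orb f y"
  unfolding orb_def by blast

lemma orbE: "w \<in> orb f y \<Longrightarrow> \<exists>m. w = (f ^^ m) y"
  unfolding orb_def by blast

lemma funpow_add_apply: "(f ^^ (m + n)) z = (f ^^ m) ((f ^^ n) z)"
  by (simp add: funpow_add)

lemma orb_same:
  assumes "finite H" "inj_on f H" "\<forall>x\<in>H. f x \<in> H" "z \<in> H" "y \<in> orb f z"
  shows "orb f y = orb f z"
proof -
  obtain n where y: "y = (f ^^ n) z" using orbE[OF assms(5)] by blast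
  obtain p where p: "p > 0" "(f ^^ p) z = z" using periodic[OF assms(1-4)] by blast
  have bk: "(f ^^ (p * n - n)) y = z"
  proof -
    have "n \<le> p * n" using p(1) by simp
    then have "p * n - n + n = p * n" by simp
    then have "(f ^^ (p * n - n)) y = (f ^^ (p * n)) z"
      unfolding y by (metis funpow_add_apply)
    then show ?thesis using funpow_period[OF p(2)] by simp
  qed
  show ?thesis
  proof
    show "orb f y \<subseteq> orb f z"
    proof
      fix w assume "w \<in> orb f y"
      then obtain m where "w = (f ^^ m) y" by (blast dest: orbE)
      then have "w = (f ^^ (m + n)) z" unfolding y by (simp only: funpow_add_apply)
      then show "w \<in> orb f z" by (rule orbI)
    qed
  next
    show "orb f z \<subseteq> orb f y"
    proof
      fix w assume "w \<in> orb f z"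
      then obtain m where "w = (f ^^ m) z" by (blast dest: orbE)
      then have "w = (f ^^ (m + (p * n - n))) y" using bk
        by (simp only: funpow_add_apply)
      then show "w \<in> orb f y" by (rule orbI)
    qed
  qed
qed

locale kd =
  fixes H :: "'a set" and sig alp :: "'a \<Rightarrow> 'a"
  assumes kd: "knot_diagram H sig alp" and red: "reduced H sig alp"
begin

abbreviation F where "F \<equiv> face sig alp"

lemma fin: "finite H" using kd unfolding knot_diagram_def by blast
lemma sig_bij: "bij_betw sig H H" using kd unfolding knot_diagram_def by blast
lemma alp_bij: "bij_betw alp H H" using kd unfolding knot_diagram_def by blast
lemma sigH: "x \<in> H \<Longrightarrow> sig x \<in> H" using sig_bij unfolding bij_betw_def by blast
lemma alpH: "x \<in> H \<Longrightarrow> alp x \<in> H" using alp_bij unfolding bij_betw_def by blast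
lemma alp2: "x \<in> H \<Longrightarrow> alp (alp x) = x" using kd unfolding knot_diagram_def by blast
lemma sig4: "x \<in> H \<Longrightarrow> sig (sig (sig (sig x))) = x"
proof -
  assume "x \<in> H"
  then have "(sig ^^ 4) x = x" using kd unfolding knot_diagram_def by blast
  then show ?thesis by (simp add: numeral_eq_Suc)
qed
lemma sig1: "x \<in> H \<Longrightarrow> sig x \<noteq> x" using kd unfolding knot_diagram_def by blast
lemma sig2: "x \<in> H \<Longrightarrow> sig (sig x) \<noteq> x"
proof -
  assume "x \<in> H"
  then have "(sig ^^ 2) x \<noteq> x" using kd unfolding knot_diagram_def by blast
  then show ?thesis by (simp add: numeral_eq_Suc)
qed
lemma sig3: "x \<in> H \<Longrightarrow> sig (sig (sig x)) \<noteq> x"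
  using sig4 sig1 by metis

lemma fH: "\<forall>x\<in>H. (sig \<circ> alp) x \<in> H" using sigH alpH by simp
lemma f_inj: "inj_on (sig \<circ> alp) H"
proof (rule comp_inj_on)
  show "inj_on alp H" using alp_bij unfolding bij_betw_def by blast
  show "inj_on sig (alp ` H)" using alp_bij sig_bij unfolding bij_betw_def by simp
qed

lemma face_eq: "z \<in> H \<Longrightarrow> y \<in> F z \<Longrightarrow> F y = F z"
  unfolding face_def using orb_same[OF fin f_inj fH] by blast
lemma face_self: "x \<in> F x" unfolding face_def by (rule orbI[where m=0]) simp
lemma face_step: "sig (alp x) \<in> F x" unfolding face_def by (rule orbI[where m=1]) simp
lemma face_sub: "z \<in> H \<Longrightarrow> F z \<subseteq> H"
  unfolding face_def using funpow_in[OF fH] by (blast dest: orbE)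
lemma face_alp: "x \<in> H \<Longrightarrow> F (alp x) = F (sig x)"
proof -
  assume x: "x \<in> H"
  have "sig x \<in> F (alp x)" using face_step[of "alp x"] alp2[OF x] by simp
  then show ?thesis using face_eq[of "alp x" "sig x"] alpH[OF x] by simp
qed
lemma face_sig_alp: "x \<in> H \<Longrightarrow> F (sig (alp x)) = F x"
  using face_eq[OF _ face_step] by blast
lemma regions_eq: "regions H sig alp = F ` H" unfolding regions_def by blast
lemma face_reg: "x \<in> H \<Longrightarrow> F x \<in> regions H sig alp" unfolding regions_eq by blast
lemma fin_reg: "finite (regions H sig alp)" unfolding regions_eq using fin by blast

lemma orb_sig: "d \<in> H \<Longrightarrow> orb sig d = {d, sig d, sig (sig d), sig (sig (sig d))}"
proof
  assume d: "d \<in> H"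
  show "orb sig d \<subseteq> {d, sig d, sig (sig d), sig (sig (sig d))}"
  proof
    fix w assume "w \<in> orb sig d"
    then obtain n where w: "w = (sig ^^ n) d" by (blast dest: orbE)
    have "(sig ^^ n) d \<in> {d, sig d, sig (sig d), sig (sig (sig d))}"
    proof (induction n)
      case 0 then show ?case by simp
    next
      case (Suc n) then show ?case using sig4[OF d] by auto
    qed
    then show "w \<in> {d, sig d, sig (sig d), sig (sig (sig d))}" using w by simp
  qed
next
  show "{d, sig d, sig (sig d), sig (sig (sig d))} \<subseteq> orb sig d"
    using orbI[of d 0 sig d] orbI[of "sig d" 1 sig d] orbI[of "sig (sig d)" 2 sig d]
      orbI[of "sig (sig (sig d))" 3 sig d] by (simp add: numeral_eq_Suc)
qed

lemma orb_sig_H: "d \<in> H \<Longrightarrow> orb sig d \<subseteq> H"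
  using orb_sig sigH by simp

lemma faces_distinct:
  assumes d: "d \<in> H" and ab: "a \<in> orb sig d" "b \<in> orb sig d" "a \<noteq> b"
  shows "F a \<noteq> F b"
proof
  assume eq: "F a = F b"
  have aH: "a \<in> H" using ab orb_sig_H[OF d] by blast
  have v: "orb sig d \<in> vertices H sig" unfolding vertices_def using d by blast
  have "{a, b} \<subseteq> orb sig d \<inter> F a" using ab eq face_self by auto
  moreover have "finite (orb sig d \<inter> F a)" using face_sub[OF aH] fin finite_subset by blast
  ultimately have "card {a, b} \<le> card (orb sig d \<inter> F a)" by (rule card_mono[rotated])
  then have "card (orb sig d \<inter> F a) \<ge> 2" using ab(3) by simp
  then have "reducible H sig alp (orb sig d)"
    unfolding reducible_def using face_reg[OF aH] by blast
  then show False using red v unfolding reduced_def by blast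
qed


lemma vertex_sum:
  assumes gv: "game_version H sig alp k a" and np: "null_pattern H sig alp k a l" and d: "d \<in> H"
  shows "zmod k dvd (l (F d) + l (F (sig d)) + l (F (sig (sig d))) + l (F (sig (sig (sig d)))))"
proof -
  define d1 where "d1 = sig d"
  define d2 where "d2 = sig d1"
  define d3 where "d3 = sig d2"
  have H1: "d1 \<in> H" "d2 \<in> H" "d3 \<in> H" unfolding d1_def d2_def d3_def using sigH d by auto
  define v where "v = orb sig d"
  have vv: "v = {d, d1, d2, d3}" unfolding v_def d1_def d2_def d3_def using orb_sig[OF d] .
  have vV: "v \<in> vertices H sig" unfolding vertices_def v_def using d by blast
  have nred: "\<not> reducible H sig alp v" using red vV unfolding reduced_def by blast
  have ne: "d \<noteq> d1" "d \<noteq> d2" "d \<noteq> d3" "d1 \<noteq> d2" "d1 \<noteq> d3" "d2 \<noteq> d3"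
    unfolding d1_def d2_def d3_def using sig1 sig2 sig3 d H1 d1_def d2_def
    by (metis, metis, metis, metis, metis, metis)
  have fne: "F d \<noteq> F d1" "F d \<noteq> F d2" "F d \<noteq> F d3" "F d1 \<noteq> F d2" "F d1 \<noteq> F d3" "F d2 \<noteq> F d3"
    using faces_distinct[OF d] ne unfolding v_def[symmetric] vv by auto
  define Q where "Q = {F d, F d1, F d2, F d3}"
  have QR: "Q \<subseteq> regions H sig alp" unfolding Q_def using face_reg d H1 by auto
  have inc: "\<And>r. r \<in> Q \<Longrightarrow> incident v r"
    unfolding Q_def incident_def vv using face_self by blast
  have ninc: "\<And>r. r \<in> regions H sig alp \<Longrightarrow> incident v r \<Longrightarrow> r \<in> Q"
  proof -
    fix r assume r: "r \<in> regions H sig alp" and i: "incident v r"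
    obtain z where z: "z \<in> H" "r = F z" using r unfolding regions_eq by blast
    obtain y where y: "y \<in> v" "y \<in> r" using i unfolding incident_def by blast
    have "F y = r" using face_eq[OF z(1)] y z by simp
    then show "r \<in> Q" unfolding Q_def using y(1) vv by auto
  qed
  have sumQ: "(\<Sum>r\<in>regions H sig alp. game_matrix a v r * l r) = (\<Sum>r\<in>Q. a v r * l r)"
  proof -
    have "(\<Sum>r\<in>regions H sig alp. game_matrix a v r * l r) = (\<Sum>r\<in>Q. game_matrix a v r * l r)"
      by (rule sum.mono_neutral_right[OF fin_reg QR]) (auto simp: game_matrix_def dest: ninc)
    also have "\<dots> = (\<Sum>r\<in>Q. a v r * l r)" by (rule sum.cong) (auto simp: game_matrix_def inc)
    finally show ?thesis .
  qed
  have sum4: "(\<Sum>r\<in>Q. a v r * l r) = a v (F d) * l (F d) + a v (F d1) * l (F d1)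
      + a v (F d2) * l (F d2) + a v (F d3) * l (F d3)"
    unfolding Q_def using fne by (simp add: algebra_simps)
  define T where "T = l (F d) + l (F d1) + l (F d2) + l (F d3)"
  have cong0: "[a v (F d) * l (F d) + a v (F d1) * l (F d1)
      + a v (F d2) * l (F d2) + a v (F d3) * l (F d3) = 0] (mod zmod k)"
  proof -
    have "[(\<Sum>r\<in>regions H sig alp. game_matrix a v r * l r) = 0] (mod zmod k)"
      using np vV unfolding null_pattern_def by blast
    then show ?thesis unfolding sumQ sum4 .
  qed
  have QR': "F d \<in> regions H sig alp" "F d1 \<in> regions H sig alp" "F d2 \<in> regions H sig alp" "F d3 \<in> regions H sig alp"
    using QR unfolding Q_def by auto
  have incs: "incident v (F d)" "incident v (F d1)" "incident v (F d2)" "incident v (F d3)"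
    using inc unfolding Q_def by auto
  have "[T = 0] (mod zmod k)"
  proof (cases k)
    case (enat n)
    then have zk: "zmod k = int n" unfolding zmod_def by simp
    obtain c where c: "non_zero_divisor n c"
        "\<forall>r\<in>regions H sig alp. incident v r \<longrightarrow> [a v r = c] (mod int n)"
      using gv vV nred enat unfolding game_version_def by force
    have ac: "[a v (F d) = c] (mod int n)" "[a v (F d1) = c] (mod int n)"
        "[a v (F d2) = c] (mod int n)" "[a v (F d3) = c] (mod int n)"
      using c(2) QR' incs by auto
    have "[a v (F d) * l (F d) + a v (F d1) * l (F d1)
      + a v (F d2) * l (F d2) + a v (F d3) * l (F d3) =
       c * l (F d) + c * l (F d1) + c * l (F d2) + c * l (F d3)] (mod int n)"
      using ac by (intro cong_add cong_mult cong_refl)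
    then have "[c * T = 0] (mod int n)" using cong0 unfolding zk T_def
      by (simp add: distrib_left) (meson cong_sym cong_trans)
    then show ?thesis using c(1) unfolding non_zero_divisor_def zk by blast
  next
    case infinity
    then have zk: "zmod k = 0" unfolding zmod_def by simp
    have "a v (F d) = 1" "a v (F d1) = 1" "a v (F d2) = 1" "a v (F d3) = 1"
      using gv vV nred infinity QR' incs unfolding game_version_def by auto
    then show ?thesis using cong0 unfolding T_def zk by simp
  qed
  then show ?thesis unfolding T_def d1_def d2_def d3_def by (simp add: cong_0_iff)
qed


abbreviation Pn where "Pn l x \<equiv> l (F x) + l (F (alp x))"

lemma straight_eq: "straight sig alp x = sig (sig (alp x))"
  unfolding straight_def by (simp add: numeral_eq_Suc)

lemma straight_H: "x \<in> H \<Longrightarrow> straight sig alp x \<in> H"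
  unfolding straight_eq using sigH alpH by blast

lemma P_straight:
  assumes gv: "game_version H sig alp k a" and np: "null_pattern H sig alp k a l" and x: "x \<in> H"
  shows "zmod k dvd (Pn l (straight sig alp x) + Pn l x)"
proof -
  define w where "w = alp x"
  have w: "w \<in> H" unfolding w_def using alpH x .
  have ww: "sig (sig w) \<in> H" using sigH w by blast
  have e1: "F (alp (sig (sig w))) = F (sig (sig (sig w)))" using face_alp[OF ww] .
  have e2: "F x = F (sig w)" unfolding w_def using face_sig_alp[OF x] by simp
  have "Pn l (straight sig alp x) + Pn l x =
     l (F w) + l (F (sig w)) + l (F (sig (sig w))) + l (F (sig (sig (sig w))))"
    unfolding straight_eq w_def[symmetric] e1 e2 using w_def by simp
  then show ?thesis using vertex_sum[OF gv np w] by simp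
qed

lemma P_iter:
  assumes gv: "game_version H sig alp k a" and np: "null_pattern H sig alp k a l" and z: "z \<in> H"
  shows "zmod k dvd (Pn l ((straight sig alp ^^ n) z) - (-1) ^ n * Pn l z)"
proof (induction n)
  case 0 then show ?case by simp
next
  case (Suc n)
  define y where "y = (straight sig alp ^^ n) z"
  have y: "y \<in> H" unfolding y_def using funpow_in[of H "straight sig alp" z n] straight_H z by blast
  have A: "zmod k dvd (Pn l (straight sig alp y) + Pn l y)" using P_straight[OF gv np y] .
  have B: "zmod k dvd (Pn l y - (-1) ^ n * Pn l z)" using Suc unfolding y_def .
  have E: "Pn l ((straight sig alp ^^ Suc n) z) - (-1) ^ Suc n * Pn l z =
      (Pn l (straight sig alp y) + Pn l y) - (Pn l y - (-1) ^ n * Pn l z)"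
    unfolding y_def by simp
  show ?case unfolding E by (rule dvd_diff[OF A B])
qed

lemma P_pm:
  assumes gv: "game_version H sig alp k a" and np: "null_pattern H sig alp k a l"
    and x: "x \<in> H" and d0: "d0 \<in> H"
  shows "\<exists>\<epsilon>::int. (\<epsilon> = 1 \<or> \<epsilon> = -1) \<and> zmod k dvd (Pn l x - \<epsilon> * Pn l d0)"
proof -
  have pm: "((-1::int) ^ n = 1 \<or> (-1::int) ^ n = -1)" for n
    by (cases "even n") auto
  obtain n where "(straight sig alp ^^ n) d0 = x \<or> (straight sig alp ^^ n) (alp d0) = x"
    using kd x d0 unfolding knot_diagram_def by blast
  then show ?thesis
  proof
    assume "(straight sig alp ^^ n) d0 = x"
    then have D: "zmod k dvd (Pn l x - (-1)^n * Pn l d0)" using P_iter[OF gv np d0, of n] by simp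
    show ?thesis using pm[of n] D by blast
  next
    assume h: "(straight sig alp ^^ n) (alp d0) = x"
    have "Pn l (alp d0) = Pn l d0" using alp2[OF d0] by simp
    then have D: "zmod k dvd (Pn l x - (-1)^n * Pn l d0)" using P_iter[OF gv np alpH[OF d0], of n] h by (simp add: add.commute)
    show ?thesis using pm[of n] D by blast
  qed
qed

lemma adj_sum:
  fixes l :: "'a set \<Rightarrow> int"
  assumes "adjacent H sig alp r r'" "r \<noteq> r'"
  shows "\<exists>x\<in>H. l r + l r' = Pn l x"
proof -
  obtain e where e: "e \<in> edges H alp" "incident e r" "incident e r'"
    and rr: "r \<in> regions H sig alp" "r' \<in> regions H sig alp"
    using assms(1) unfolding adjacent_def by blast
  obtain x where x: "x \<in> H" "e = {x, alp x}" using e(1) unfolding edges_def by blast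
  have loc: "q \<in> {F x, F (alp x)}" if q: "q \<in> regions H sig alp" "incident e q" for q
  proof -
    obtain z where z: "z \<in> H" "q = F z" using q(1) unfolding regions_eq by blast
    obtain y where y: "y \<in> e" "y \<in> q" using q(2) unfolding incident_def by blast
    have "F y = q" using face_eq[OF z(1)] y z by simp
    then show ?thesis using y(1) x(2) by auto
  qed
  have "r \<in> {F x, F (alp x)}" "r' \<in> {F x, F (alp x)}" using loc rr e by auto
  then have "(r = F x \<and> r' = F (alp x)) \<or> (r = F (alp x) \<and> r' = F x)" using assms(2) by blast
  then have "l r + l r' = Pn l x" by (elim disjE conjE) (simp_all add: add.commute)
  then show ?thesis using x(1) by blast
qed

lemma adjI: "r \<in> regions H sig alp \<Longrightarrow> r' \<in> regions H sig alp \<Longrightarrow> y \<in> H \<Longrightarrow>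
    y \<in> r \<Longrightarrow> alp y \<in> r' \<Longrightarrow> adjacent H sig alp r r'"
proof -
  assume a: "r \<in> regions H sig alp" "r' \<in> regions H sig alp" "y \<in> H" "y \<in> r" "alp y \<in> r'"
  have e: "{y, alp y} \<in> edges H alp" unfolding edges_def using a(3) by blast
  have i1: "incident {y, alp y} r" unfolding incident_def using a(4) by blast
  have i2: "incident {y, alp y} r'" unfolding incident_def using a(5) by blast
  show ?thesis unfolding adjacent_def using a(1,2) e i1 i2 by blast
qed

lemma adj_alp: "x \<in> H \<Longrightarrow> adjacent H sig alp (F x) (F (alp x))"
  by (rule adjI) (auto intro: face_reg alpH face_self)

lemma adj_straight: "x \<in> H \<Longrightarrow> adjacent H sig alp (F x) (F (straight sig alp x))"
proof -
  assume x: "x \<in> H"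
  define y where "y = sig (alp x)"
  have y: "y \<in> H" unfolding y_def using sigH alpH x by blast
  have "F (alp y) = F (straight sig alp x)" unfolding straight_eq y_def[symmetric]
    using face_alp[OF y] by simp
  moreover have "y \<in> F x" unfolding y_def by (rule face_step)
  moreover have "alp y \<in> F (alp y)" by (rule face_self)
  ultimately show ?thesis using adjI[of "F x" "F (straight sig alp x)" y] face_reg x straight_H y
    by simp
qed

lemma conn_iter: "z \<in> H \<Longrightarrow> (F z, F ((straight sig alp ^^ n) z)) \<in> {(x, y). adjacent H sig alp x y}\<^sup>*"
proof (induction n)
  case 0 then show ?case by simp
next
  case (Suc n)
  have "(straight sig alp ^^ n) z \<in> H" using funpow_in[of H "straight sig alp" z n] straight_H Suc.prems by blast
  then have "(F ((straight sig alp ^^ n) z), F ((straight sig alp ^^ Suc n) z)) \<in> {(x, y). adjacent H sig alp x y}"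
    using adj_straight by simp
  then show ?case using Suc by (meson rtrancl.rtrancl_into_rtrancl)
qed

lemma conn: "a \<in> H \<Longrightarrow> b \<in> H \<Longrightarrow> (F a, F b) \<in> {(x, y). adjacent H sig alp x y}\<^sup>*"
proof -
  assume a: "a \<in> H" and b: "b \<in> H"
  obtain n where "(straight sig alp ^^ n) a = b \<or> (straight sig alp ^^ n) (alp a) = b"
    using kd a b unfolding knot_diagram_def by blast
  then show ?thesis
  proof
    assume "(straight sig alp ^^ n) a = b"
    then show ?thesis using conn_iter[OF a, of n] by simp
  next
    assume h: "(straight sig alp ^^ n) (alp a) = b"
    have "(F a, F (alp a)) \<in> {(x, y). adjacent H sig alp x y}" using adj_alp[OF a] by simp
    then show ?thesis using conn_iter[OF alpH[OF a], of n] h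
      by (meson converse_rtrancl_into_rtrancl)
  qed
qed


lemma path:
  fixes l :: "'a set \<Rightarrow> int"
  assumes gv: "game_version H sig alp k a" and np: "null_pattern H sig alp k a l"
    and cb: "checkerboard H sig alp S" and d0: "d0 \<in> H"
  shows "(r1, r) \<in> {(x, y). adjacent H sig alp x y} ^^ n \<Longrightarrow>
    \<exists>j::int. \<bar>j\<bar> \<le> int n \<and> (even j \<longleftrightarrow> (r1 \<in> S \<longleftrightarrow> r \<in> S)) \<and>
      zmod k dvd (l r1 - ((if even j then l r else - l r) + j * Pn l d0))"
proof (induction n arbitrary: r)
  case 0
  then have "r = r1" by simp
  then show ?case by (intro exI[of _ 0]) simp
next
  case (Suc n)
  from Suc.prems obtain q where q: "(r1, q) \<in> {(x, y). adjacent H sig alp x y} ^^ n"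
      "(q, r) \<in> {(x, y). adjacent H sig alp x y}" by (rule relpow_Suc_E)
  obtain j where j: "\<bar>j\<bar> \<le> int n" "even j \<longleftrightarrow> (r1 \<in> S \<longleftrightarrow> q \<in> S)"
      "zmod k dvd (l r1 - ((if even j then l q else - l q) + j * Pn l d0))"
    using Suc.IH[OF q(1)] by blast
  show ?case
  proof (cases "q = r")
    case True then show ?thesis using j by (intro exI[of _ j]) auto
  next
    case False
    have adj: "adjacent H sig alp q r" using q(2) by simp
    have col: "q \<in> S \<longleftrightarrow> r \<notin> S" using cb adj False unfolding checkerboard_def by blast
    obtain x where x: "x \<in> H" "l q + l r = Pn l x" using adj_sum[OF adj False] by blast
    obtain \<epsilon> where eps: "\<epsilon> = 1 \<or> \<epsilon> = -1" "zmod k dvd (Pn l x - \<epsilon> * Pn l d0)"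
      using P_pm[OF gv np x(1) d0] by blast
    have D: "zmod k dvd (l q + l r - \<epsilon> * Pn l d0)" using eps(2) x(2) by simp
    have oe: "odd \<epsilon>" using eps(1) by auto
    show ?thesis
    proof (cases "even j")
      case True
      have od: "\<not> even (j + \<epsilon>)" using True oe by simp
      have E: "l r1 - ((if even (j + \<epsilon>) then l r else - l r) + (j + \<epsilon>) * Pn l d0) =
          (l r1 - ((if even j then l q else - l q) + j * Pn l d0)) + (l q + l r - \<epsilon> * Pn l d0)"
        using True od by (simp add: algebra_simps)
      have "zmod k dvd (l r1 - ((if even (j + \<epsilon>) then l r else - l r) + (j + \<epsilon>) * Pn l d0))"
        unfolding E by (rule dvd_add[OF j(3) D])
      moreover have "\<bar>j + \<epsilon>\<bar> \<le> int (Suc n)" using j(1) eps(1) by auto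
      moreover have "even (j + \<epsilon>) \<longleftrightarrow> (r1 \<in> S \<longleftrightarrow> r \<in> S)" using od j(2) True col by blast
      ultimately show ?thesis by blast
    next
      case False
      have od: "even (j - \<epsilon>)" using False oe by simp
      have E: "l r1 - ((if even (j - \<epsilon>) then l r else - l r) + (j - \<epsilon>) * Pn l d0) =
          (l r1 - ((if even j then l q else - l q) + j * Pn l d0)) - (l q + l r - \<epsilon> * Pn l d0)"
        using False od by (simp add: algebra_simps)
      have "zmod k dvd (l r1 - ((if even (j - \<epsilon>) then l r else - l r) + (j - \<epsilon>) * Pn l d0))"
        unfolding E by (rule dvd_diff[OF j(3) D])
      moreover have "\<bar>j - \<epsilon>\<bar> \<le> int (Suc n)" using j(1) eps(1) by auto
      moreover have "even (j - \<epsilon>) \<longleftrightarrow> (r1 \<in> S \<longleftrightarrow> r \<in> S)" using od j(2) False col by blast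
      ultimately show ?thesis by blast
    qed
  qed
qed

end

theorem mainTheorem12:
  fixes H :: "'a set" and sig alp :: "'a \<Rightarrow> 'a" and k :: enat
    and a :: "'a set \<Rightarrow> 'a set \<Rightarrow> int" and l :: "'a set \<Rightarrow> int"
    and S :: "'a set set" and e r1 r2 :: "'a set"
  assumes "knot_diagram H sig alp"
    and "reduced H sig alp"
    and "k \<ge> 2"
    and "game_version H sig alp k a"
    and "null_pattern H sig alp k a l"
    and "e \<in> edges H alp"
    and "checkerboard H sig alp S"
    and "r1 \<in> regions H sig alp" and "r2 \<in> regions H sig alp"
    and "r1 \<in> S \<longleftrightarrow> r2 \<in> S"
  shows "\<exists>i::int. \<bar>2 * i\<bar> \<le> int (dual_dist H sig alp r1 r2) \<and>
           [l r1 = l r2 + 2 * i * push_number sig alp l e] (mod zmod k)"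
proof -
  interpret kd H sig alp using assms(1,2) by unfold_locales
  obtain x where x: "x \<in> H" "e = {x, alp x}" using assms(6) unfolding edges_def by blast
  define d0 where "d0 = (SOME d. d \<in> e)"
  have d0e: "d0 \<in> e" unfolding d0_def x(2) by (rule someI[of _ x]) simp
  have d0: "d0 \<in> H" using d0e x alpH by auto
  have pn: "push_number sig alp l e = Pn l d0" unfolding push_number_def d0_def Let_def by simp
  obtain a' where a': "a' \<in> H" "r1 = F a'" using assms(8) unfolding regions_eq by blast
  obtain b' where b': "b' \<in> H" "r2 = F b'" using assms(9) unfolding regions_eq by blast
  have "(r1, r2) \<in> {(x, y). adjacent H sig alp x y}\<^sup>*" using conn[OF a'(1) b'(1)] a' b' by simp
  then obtain n where "(r1, r2) \<in> {(x, y). adjacent H sig alp x y} ^^ n" using rtrancl_power by blast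
  then have P: "(r1, r2) \<in> {(x, y). adjacent H sig alp x y} ^^ (dual_dist H sig alp r1 r2)"
    unfolding dual_dist_def by (rule LeastI)
  obtain j where j: "\<bar>j\<bar> \<le> int (dual_dist H sig alp r1 r2)" "even j \<longleftrightarrow> (r1 \<in> S \<longleftrightarrow> r2 \<in> S)"
      "zmod k dvd (l r1 - ((if even j then l r2 else - l r2) + j * Pn l d0))"
    using path[OF assms(4,5,7) d0 P] by blast
  have ev: "even j" using j(2) assms(10) by simp
  then obtain i where i: "j = 2 * i" by (rule evenE)
  have "zmod k dvd (l r1 - (l r2 + 2 * i * push_number sig alp l e))"
    using j(3) ev unfolding pn i by simp
  then show ?thesis using j(1) unfolding i by (intro exI[of _ i]) (simp add: cong_iff_dvd_diff)
qed

end
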